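(* Let $Z$ be an $n\times n$ positive definite complex matrix with largest eigenvalue $a$ and smallest eigenvalue $b$, and let $E$ be any orthogonal projection ($E=E^*=E^2$). Then $$EZE \le \frac{(a+b)^2}{4ab}\, Z.$$
   Context: $\le$ denotes the Loewner order on Hermitian matrices. *)

theory Defs
  imports "Jordan_Normal_Form.Schur_Decomposition"
begin

definition hermitian_mat :: "complex mat \<Rightarrow> bool" where
  "hermitian_mat A \<longleftrightarrow> A \<in> carrier_mat (dim_row A) (dim_row A) \<and> mat_adjoint A = A"

definition qform :: "complex mat \<Rightarrow> complex vec \<Rightarrow> complex" where
  "qform A v = conjugate v \<bullet> (A *\<^sub>v v)"

definition positive_semidefinite :: "complex mat \<Rightarrow> bool" where
  "positive_semidefinite A \<longleftrightarrow> hermitian_mat A \<and>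
     (\<forall>v \<in> carrier_vec (dim_row A). 0 \<le> Re (qform A v))"

definition positive_definite :: "complex mat \<Rightarrow> bool" where
  "positive_definite A \<longleftrightarrow> hermitian_mat A \<and>
     (\<forall>v \<in> carrier_vec (dim_row A). v \<noteq> 0\<^sub>v (dim_row A) \<longrightarrow> 0 < Re (qform A v))"

definition loewner_le :: "complex mat \<Rightarrow> complex mat \<Rightarrow> bool" where
  "loewner_le A B \<longleftrightarrow> dim_row A = dim_row B \<and> dim_col A = dim_col B \<and>
     hermitian_mat A \<and> hermitian_mat B \<and> positive_semidefinite (B - A)"

end

theory Submission
  imports Defs
begin

lemma mat_adjoint_carrier: "A \<in> carrier_mat n m \<Longrightarrow> mat_adjoint A \<in> carrier_mat m n"
  unfolding mat_adjoint_def by auto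

lemma mat_adjoint_index: "A \<in> carrier_mat n m \<Longrightarrow> i < m \<Longrightarrow> j < n \<Longrightarrow> mat_adjoint A $$ (i,j) = cnj (A $$ (j,i))"
  unfolding mat_adjoint_def by (auto simp: mat_of_rows_def)

lemma adj_inner:
  fixes A :: "complex mat"
  assumes A: "A \<in> carrier_mat n n" and u: "u \<in> carrier_vec n" and v: "v \<in> carrier_vec n"
  shows "conjugate u \<bullet> (A *\<^sub>v v) = conjugate (mat_adjoint A *\<^sub>v u) \<bullet> v"
proof -
  have "conjugate u \<bullet> (A *\<^sub>v v) = (\<Sum>i<n. cnj (u$i) * (\<Sum>j<n. A$$(i,j) * v$j))"
    using A u v by (auto simp: scalar_prod_def mult_mat_vec_def lessThan_atLeast0)
  also have "\<dots> = (\<Sum>i<n. \<Sum>j<n. cnj (u$i) * A$$(i,j) * v$j)"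
    by (simp add: sum_distrib_left mult.assoc)
  also have "\<dots> = (\<Sum>j<n. \<Sum>i<n. cnj (u$i) * A$$(i,j) * v$j)"
    by (rule sum.swap)
  also have "\<dots> = (\<Sum>j<n. (\<Sum>i<n. cnj (u$i) * A$$(i,j)) * v$j)"
    by (simp add: sum_distrib_right)
  also have "\<dots> = conjugate (mat_adjoint A *\<^sub>v u) \<bullet> v"
  proof -
    have e: "(mat_adjoint A *\<^sub>v u) $ j = (\<Sum>i<n. cnj (A$$(i,j)) * u$i)" if j: "j < n" for j
      using A u j mat_adjoint_carrier[OF A]
      by (auto simp: scalar_prod_def mult_mat_vec_def lessThan_atLeast0 mat_adjoint_index intro!: sum.cong)
    have "conjugate (mat_adjoint A *\<^sub>v u) \<bullet> v = (\<Sum>j<n. cnj ((mat_adjoint A *\<^sub>v u) $ j) * v$j)"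
      using v mat_adjoint_carrier[OF A] by (auto simp: scalar_prod_def lessThan_atLeast0)
    also have "\<dots> = (\<Sum>j<n. (\<Sum>i<n. cnj (u$i) * A$$(i,j)) * v$j)"
      by (rule sum.cong) (auto simp: e cnj_sum mult.commute)
    finally show ?thesis by simp
  qed
  finally show ?thesis .
qed

lemma herm_inner:
  fixes A :: "complex mat"
  assumes A: "A \<in> carrier_mat n n" and h: "mat_adjoint A = A" and u: "u \<in> carrier_vec n" and v: "v \<in> carrier_vec n"
  shows "conjugate u \<bullet> (A *\<^sub>v v) = cnj (conjugate v \<bullet> (A *\<^sub>v u))"
proof -
  have "conjugate u \<bullet> (A *\<^sub>v v) = conjugate (A *\<^sub>v u) \<bullet> v" using adj_inner[OF A u v] h by simp
  also have "\<dots> = cnj (conjugate v \<bullet> (A *\<^sub>v u))"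
    using A u v by (auto simp: scalar_prod_def mult_mat_vec_def lessThan_atLeast0 mult.commute)
  finally show ?thesis .
qed

lemma qform_expand:
  fixes A :: "complex mat"
  assumes A: "A \<in> carrier_mat n n" and u: "u \<in> carrier_vec n" and v: "v \<in> carrier_vec n"
  shows "qform A (s \<cdot>\<^sub>v u + t \<cdot>\<^sub>v v) = cnj s * s * qform A u + cnj s * t * (conjugate u \<bullet> (A *\<^sub>v v))
     + cnj t * s * (conjugate v \<bullet> (A *\<^sub>v u)) + cnj t * t * qform A v"
  using A u v unfolding qform_def
  by (auto simp: scalar_prod_def mult_mat_vec_def lessThan_atLeast0 sum.distrib sum_distrib_left
      algebra_simps intro!: sum.cong)

definition nrm :: "complex vec \<Rightarrow> real" where "nrm v = Re (conjugate v \<bullet> v)"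

lemma nrm_sum: assumes "v \<in> carrier_vec n" shows "nrm v = (\<Sum>i<n. (cmod (v$i))^2)"
proof -
  have "\<And>z. Re (z * cnj z) = (cmod z)^2" by (simp add: complex_norm_square[symmetric])
  then show ?thesis using assms
    by (auto simp: nrm_def scalar_prod_def lessThan_atLeast0 mult.commute)
qed

lemma nrm_nonneg: assumes "v \<in> carrier_vec n" shows "0 \<le> nrm v"
  using nrm_sum[OF assms] by (simp add: sum_nonneg)

lemma inner_bound:
  assumes u: "u \<in> carrier_vec n" and w: "w \<in> carrier_vec n"
  shows "\<bar>Re (conjugate u \<bullet> w)\<bar> \<le> (nrm u + nrm w) / 2"
proof -
  have e: "conjugate u \<bullet> w = (\<Sum>i<n. cnj (u$i) * w$i)"
    using u w by (auto simp: scalar_prod_def lessThan_atLeast0)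
  have "\<bar>Re (conjugate u \<bullet> w)\<bar> \<le> cmod (\<Sum>i<n. cnj (u$i) * w$i)" unfolding e by (rule abs_Re_le_cmod)
  also have "\<dots> \<le> (\<Sum>i<n. cmod (cnj (u$i) * w$i))" by (rule norm_sum)
  also have "\<dots> \<le> (\<Sum>i<n. ((cmod (u$i))^2 + (cmod (w$i))^2)/2)"
  proof (rule sum_mono)
    fix i
    have "0 \<le> (cmod (u$i) - cmod (w$i))^2" by simp
    then show "cmod (cnj (u$i) * w$i) \<le> ((cmod (u$i))^2 + (cmod (w$i))^2)/2"
      by (simp add: norm_mult power2_eq_square algebra_simps)
  qed
  also have "\<dots> = (nrm u + nrm w) / 2"
    using nrm_sum[OF u] nrm_sum[OF w] by (simp add: sum.distrib sum_divide_distrib[symmetric])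
  finally show ?thesis .
qed

lemma mat_bound:
  fixes A :: "complex mat"
  assumes A: "A \<in> carrier_mat n n"
  shows "\<exists>C\<ge>0. \<forall>v\<in>carrier_vec n. nrm (A *\<^sub>v v) \<le> C * nrm v"
proof (intro exI[of _ "\<Sum>i<n. (\<Sum>j<n. cmod (A$$(i,j)))^2"] conjI ballI)
  show "0 \<le> (\<Sum>i<n. (\<Sum>j<n. cmod (A$$(i,j)))^2)" by (simp add: sum_nonneg)
  fix v :: "complex vec" assume v: "v \<in> carrier_vec n"
  have vj: "cmod (v$j) \<le> sqrt (nrm v)" if "j < n" for j
  proof -
    have "(cmod (v$j))^2 \<le> nrm v" unfolding nrm_sum[OF v]
      by (rule member_le_sum) (use that in auto)
    then show ?thesis by (simp add: real_le_rsqrt)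
  qed
  have row: "(cmod ((A *\<^sub>v v)$i))^2 \<le> (\<Sum>j<n. cmod (A$$(i,j)))^2 * nrm v" if i: "i < n" for i
  proof -
    have "(A *\<^sub>v v)$i = (\<Sum>j<n. A$$(i,j) * v$j)"
      using A v i by (auto simp: mult_mat_vec_def scalar_prod_def lessThan_atLeast0)
    then have "cmod ((A *\<^sub>v v)$i) \<le> (\<Sum>j<n. cmod (A$$(i,j)) * cmod (v$j))"
      by (simp add: norm_sum norm_mult order_trans[OF norm_sum])
    also have "\<dots> \<le> (\<Sum>j<n. cmod (A$$(i,j)) * sqrt (nrm v))"
      by (rule sum_mono) (use vj in \<open>auto intro: mult_left_mono\<close>)
    also have "\<dots> = (\<Sum>j<n. cmod (A$$(i,j))) * sqrt (nrm v)" by (simp add: sum_distrib_right)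
    finally have "(cmod ((A *\<^sub>v v)$i))^2 \<le> ((\<Sum>j<n. cmod (A$$(i,j))) * sqrt (nrm v))^2"
      by (simp add: power_mono)
    also have "\<dots> = (\<Sum>j<n. cmod (A$$(i,j)))^2 * nrm v"
      using nrm_nonneg[OF v] by (simp add: power_mult_distrib)
    finally show ?thesis .
  qed
  have "nrm (A *\<^sub>v v) = (\<Sum>i<n. (cmod ((A *\<^sub>v v)$i))^2)"
    using A v by (intro nrm_sum) auto
  also have "\<dots> \<le> (\<Sum>i<n. (\<Sum>j<n. cmod (A$$(i,j)))^2 * nrm v)"
    by (rule sum_mono) (use row in auto)
  also have "\<dots> = (\<Sum>i<n. (\<Sum>j<n. cmod (A$$(i,j)))^2) * nrm v" by (simp add: sum_distrib_right)
  finally show "nrm (A *\<^sub>v v) \<le> (\<Sum>i<n. (\<Sum>j<n. cmod (A$$(i,j)))^2) * nrm v" .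
qed

lemma quad_disc:
  fixes a b c :: real
  assumes "\<And>t. 0 \<le> a * t^2 + 2 * b * t + c" and a0: "0 \<le> a"
  shows "b^2 \<le> a * c"
proof (cases "a = 0")
  case True
  show ?thesis
  proof (rule ccontr)
    assume "\<not> ?thesis"
    then have "b \<noteq> 0" using True by auto
    have "0 \<le> a * (-(c+1)/(2*b))^2 + 2 * b * (-(c+1)/(2*b)) + c" by (rule assms)
    then show False using True \<open>b \<noteq> 0\<close> by (simp add: field_simps)
  qed
next
  case False
  have "0 \<le> a * (-b/a)^2 + 2 * b * (-b/a) + c" by (rule assms)
  then have "0 \<le> c - b^2/a" using False by (simp add: field_simps power2_eq_square)
  then show ?thesis using False a0 by (simp add: field_simps)
qed

lemma qform_scale:
  fixes A :: "complex mat"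
  assumes A: "A \<in> carrier_mat n n" and v: "v \<in> carrier_vec n"
  shows "qform A (c \<cdot>\<^sub>v v) = cnj c * c * qform A v"
proof -
  have cv: "conjugate v \<in> carrier_vec n" using v by simp
  have Av: "A *\<^sub>v v \<in> carrier_vec n" using A v by simp
  show ?thesis unfolding qform_def conjugate_smult_vec mult_mat_vec[OF A v]
    using smult_scalar_prod_distrib[OF cv Av] scalar_prod_smult_distrib[OF cv Av] cv Av
    by (simp add: smult_scalar_prod_distrib[of _ n] mult.assoc)
qed

lemma smult_one_mat_vec:
  fixes v :: "complex vec"
  assumes v: "v \<in> carrier_vec n"
  shows "(c \<cdot>\<^sub>m 1\<^sub>m n) *\<^sub>v v = c \<cdot>\<^sub>v v"
proof -
  have "(c \<cdot>\<^sub>m 1\<^sub>m n) *\<^sub>v v = c \<cdot>\<^sub>v (1\<^sub>m n *\<^sub>v v)"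
  proof (rule eq_vecI)
    fix i assume "i < dim_vec (c \<cdot>\<^sub>v (1\<^sub>m n *\<^sub>v v))"
    then have i: "i < n" using v by simp
    have "(\<Sum>j = 0..<n. c * (if j = i then 1 else 0) * v $ j) = (\<Sum>j = 0..<n. if j = i then c * v $ i else 0)"
      by (rule sum.cong) auto
    also have "\<dots> = c * v $ i" using i by simp
    finally show "((c \<cdot>\<^sub>m 1\<^sub>m n) *\<^sub>v v) $ i = (c \<cdot>\<^sub>v (1\<^sub>m n *\<^sub>v v)) $ i"
      using v i by (simp add: scalar_prod_def)
  qed (use v in simp)
  then show ?thesis using v by simp
qed

lemma nrm_qform: "v \<in> carrier_vec n \<Longrightarrow> nrm v = Re (qform (1\<^sub>m n) v)"
  by (simp add: nrm_def qform_def)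

lemma qform_diff_id:
  fixes A :: "complex mat"
  assumes A: "A \<in> carrier_mat n n" and v: "v \<in> carrier_vec n"
  shows "qform (A - c \<cdot>\<^sub>m 1\<^sub>m n) v = qform A v - c * (conjugate v \<bullet> v)"
proof -
  have "(A - c \<cdot>\<^sub>m 1\<^sub>m n) *\<^sub>v v = A *\<^sub>v v - c \<cdot>\<^sub>v v"
    using A v by (simp add: minus_mult_distrib_mat_vec smult_one_mat_vec)
  then show ?thesis using A v unfolding qform_def
    by (simp add: scalar_prod_minus_distrib[of _ n])
qed

lemma adj_entry:
  fixes A :: "complex mat"
  assumes A: "A \<in> carrier_mat n n" and h: "mat_adjoint A = A" and i: "i < n" and j: "j < n"
  shows "cnj (A $$ (j,i)) = A $$ (i,j)"
  using mat_adjoint_index[OF A i j] h by simp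

lemma adj_eqI:
  fixes A :: "complex mat"
  assumes A: "A \<in> carrier_mat n n" and h: "\<And>i j. i < n \<Longrightarrow> j < n \<Longrightarrow> cnj (A $$ (j,i)) = A $$ (i,j)"
  shows "mat_adjoint A = A"
  by (rule eq_matI) (use A mat_adjoint_carrier[OF A] in \<open>auto simp: mat_adjoint_index[OF A] h\<close>)

lemma cinner_self:
  fixes v :: "complex vec"
  assumes v: "v \<in> carrier_vec n"
  shows "conjugate v \<bullet> v = complex_of_real (nrm v)"
proof -
  have "conjugate v \<bullet> v = (\<Sum>i<n. cnj (v$i) * v$i)"
    using v by (auto simp: scalar_prod_def lessThan_atLeast0)
  also have "\<dots> = (\<Sum>i<n. complex_of_real ((cmod (v$i))^2))"
    by (rule sum.cong) (simp_all add: complex_norm_square mult.commute del: of_real_power)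
  also have "\<dots> = complex_of_real (nrm v)" using nrm_sum[OF v] by simp
  finally show ?thesis .
qed

lemma herm_min_eig:
  fixes Z :: "complex mat"
  assumes Z: "Z \<in> carrier_mat n n" and h: "mat_adjoint Z = Z" and n: "0 < n"
  shows "\<exists>\<mu>. eigenvalue Z (complex_of_real \<mu>) \<and> (\<forall>v\<in>carrier_vec n. \<mu> * nrm v \<le> Re (qform Z v))"
proof -
  obtain CZ where CZ0: "CZ \<ge> 0" and CZ: "\<And>v. v \<in> carrier_vec n \<Longrightarrow> nrm (Z *\<^sub>v v) \<le> CZ * nrm v"
    using mat_bound[OF Z] by blast
  have qb: "\<bar>Re (qform Z v)\<bar> \<le> (1 + CZ)/2 * nrm v" if v: "v \<in> carrier_vec n" for v
  proof -
    have "\<bar>Re (qform Z v)\<bar> \<le> (nrm v + nrm (Z *\<^sub>v v))/2"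
      unfolding qform_def using Z v by (intro inner_bound) auto
    also have "\<dots> \<le> (1 + CZ)/2 * nrm v" using CZ[OF v] by (simp add: field_simps)
    finally show ?thesis .
  qed
  define S where "S = {Re (qform Z v) | v. v \<in> carrier_vec n \<and> nrm v = 1}"
  define \<mu> where "\<mu> = Inf S"
  have u0: "unit_vec n 0 \<in> carrier_vec n" "nrm (unit_vec n 0) = 1"
  proof -
    show "unit_vec n 0 \<in> carrier_vec n" by simp
    have "nrm (unit_vec n 0) = (\<Sum>i<n. (cmod (unit_vec n 0 $ i))^2)" by (rule nrm_sum) simp
    also have "\<dots> = (\<Sum>i<n. if i = 0 then 1 else 0)" by (rule sum.cong) auto
    also have "\<dots> = 1" using n by simp
    finally show "nrm (unit_vec n 0) = 1" .
  qed
  have Sne: "S \<noteq> {}" unfolding S_def using u0 by blast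
  have Sbdd: "bdd_below S" unfolding S_def bdd_below_def
    apply (rule exI[of _ "-(1+CZ)/2"])
    using qb by force
  have mu_le: "\<mu> \<le> Re (qform Z v)" if "v \<in> carrier_vec n" "nrm v = 1" for v
    unfolding \<mu>_def by (rule cInf_lower) (use that Sbdd in \<open>auto simp: S_def\<close>)
  have mu_all: "\<mu> * nrm v \<le> Re (qform Z v)" if v: "v \<in> carrier_vec n" for v
  proof (cases "nrm v = 0")
    case True
    then show ?thesis using qb[OF v] by simp
  next
    case False
    then have pos: "nrm v > 0" using nrm_nonneg[OF v] by auto
    define c where "c = complex_of_real (1 / sqrt (nrm v))"
    have r: "(1 / sqrt (nrm v)) * (1 / sqrt (nrm v)) = 1 / nrm v" using pos by simp
    have cc: "cnj c * c = complex_of_real (1 / nrm v)"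
      unfolding c_def complex_cnj_complex_of_real of_real_mult[symmetric] r ..
    have u: "c \<cdot>\<^sub>v v \<in> carrier_vec n" using v by simp
    have "nrm (c \<cdot>\<^sub>v v) = Re (cnj c * c * qform (1\<^sub>m n) v)"
      using nrm_qform[OF u] qform_scale[of "1\<^sub>m n" n v c] v by simp
    also have "\<dots> = 1" using cc pos nrm_qform[OF v] by simp
    finally have "\<mu> \<le> Re (qform Z (c \<cdot>\<^sub>v v))" using mu_le[OF u] by simp
    also have "\<dots> = Re (qform Z v) / nrm v" using qform_scale[OF Z v, of c] cc by simp
    finally show ?thesis using pos by (simp add: field_simps)
  qed
  define H where "H = Z - complex_of_real \<mu> \<cdot>\<^sub>m 1\<^sub>m n"
  have H: "H \<in> carrier_mat n n" unfolding H_def by (rule minus_carrier_mat) simp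
  have fH: "Re (qform H v) = Re (qform Z v) - \<mu> * nrm v" if v: "v \<in> carrier_vec n" for v
    using qform_diff_id[OF Z v, of "complex_of_real \<mu>"] by (simp add: H_def nrm_def)
  have fH0: "0 \<le> Re (qform H v)" if v: "v \<in> carrier_vec n" for v
    using fH[OF v] mu_all[OF v] by simp
  have hH: "mat_adjoint H = H"
  proof (rule adj_eqI[OF H])
    fix i j assume i: "i < n" and j: "j < n"
    show "cnj (H $$ (j,i)) = H $$ (i,j)"
      using adj_entry[OF Z h i j] i j Z by (auto simp: H_def)
  qed
  have "det H = 0"
  proof (rule ccontr)
    assume "det H \<noteq> 0"
    from det_non_zero_imp_unit[OF H this, of "()"]
    obtain K where K: "K \<in> carrier_mat n n" and KH: "K * H = 1\<^sub>m n"
      unfolding Units_def ring_mat_def by auto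
    obtain CH where CH0: "CH \<ge> 0" and CH: "\<And>v. v \<in> carrier_vec n \<Longrightarrow> nrm (H *\<^sub>v v) \<le> CH * nrm v"
      using mat_bound[OF H] by blast
    obtain CK where CK0: "CK \<ge> 0" and CK: "\<And>v. v \<in> carrier_vec n \<Longrightarrow> nrm (K *\<^sub>v v) \<le> CK * nrm v"
      using mat_bound[OF K] by blast
    define D where "D = CK * (1 + CH) / 2"
    have key: "nrm y \<le> D * Re (qform H y)" if y: "y \<in> carrier_vec n" for y
    proof -
      define u where "u = H *\<^sub>v y"
      have u: "u \<in> carrier_vec n" using H y by (simp add: u_def)
      define m where "m = nrm u"
      have m0: "0 \<le> m" using nrm_nonneg[OF u] by (simp add: m_def)
      have cross1: "conjugate u \<bullet> (H *\<^sub>v y) = complex_of_real m"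
        using cinner_self[OF u] by (simp add: u_def[symmetric] m_def)
      have cross2: "conjugate y \<bullet> (H *\<^sub>v u) = complex_of_real m"
        using herm_inner[OF H hH y u] cross1 by simp
      have "m^2 \<le> Re (qform H u) * Re (qform H y)"
      proof (rule quad_disc)
        fix t :: real
        have "0 \<le> Re (qform H (complex_of_real t \<cdot>\<^sub>v u + 1 \<cdot>\<^sub>v y))"
          using fH0 u y by simp
        also have "\<dots> = Re (qform H u) * t^2 + 2 * m * t + Re (qform H y)"
          unfolding qform_expand[OF H u y] cross1 cross2 by (simp add: power2_eq_square)
        finally show "0 \<le> Re (qform H u) * t^2 + 2 * m * t + Re (qform H y)" .
      qed (use fH0 u in auto)
      moreover have "Re (qform H u) \<le> (1 + CH)/2 * m"
      proof -
        have "Re (qform H u) \<le> (nrm u + nrm (H *\<^sub>v u))/2"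
          unfolding qform_def using H u inner_bound[of u n "H *\<^sub>v u"] by auto
        also have "\<dots> \<le> (1 + CH)/2 * m" using CH[OF u] by (simp add: field_simps m_def)
        finally show ?thesis .
      qed
      ultimately have "m^2 \<le> (1 + CH)/2 * m * Re (qform H y)"
        using fH0[OF y] by (meson mult_right_mono order_trans)
      then have m_le: "m \<le> (1 + CH)/2 * Re (qform H y)"
        using m0 by (cases "m = 0") (auto simp: power2_eq_square fH0[OF y] CH0 mult.assoc)
      have "K *\<^sub>v u = (K * H) *\<^sub>v y" using assoc_mult_mat_vec[OF K H y] by (simp add: u_def)
      then have "y = K *\<^sub>v u" using KH y by simp
      then have "nrm y \<le> CK * m" using CK[OF u] by (simp add: m_def)
      also have "\<dots> \<le> CK * ((1 + CH)/2 * Re (qform H y))" by (rule mult_left_mono[OF m_le CK0])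
      finally show ?thesis by (simp add: D_def)
    qed
    have "1 \<le> D * Re (qform H (unit_vec n 0))" using key[OF u0(1)] u0(2) by simp
    then have D0: "D > 0"
    proof -
      assume a: "1 \<le> D * Re (qform H (unit_vec n 0))"
      show "D > 0"
      proof (rule ccontr)
        assume "\<not> D > 0"
        then have "D * Re (qform H (unit_vec n 0)) \<le> 0"
          using fH0[OF u0(1)] by (intro mult_nonpos_nonneg) auto
        then show False using a by simp
      qed
    qed
    have "\<mu> + 1/D \<le> \<mu>" unfolding \<mu>_def
    proof (rule cInf_greatest[OF Sne])
      fix s assume "s \<in> S"
      then obtain v where v: "v \<in> carrier_vec n" "nrm v = 1" and s: "s = Re (qform Z v)"
        unfolding S_def by auto
      have "1 \<le> D * Re (qform H v)" using key[OF v(1)] v(2) by simp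
      then have "1/D \<le> Re (qform H v)" using D0 by (simp add: field_simps)
      then show "Inf S + 1/D \<le> s" using fH[OF v(1)] v(2) s by (simp add: \<mu>_def)
    qed
    then show False using D0 by simp
  qed
  then obtain v where v: "v \<in> carrier_vec n" "v \<noteq> 0\<^sub>v n" "H *\<^sub>v v = 0\<^sub>v n"
    using det_0_iff_vec_prod_zero[OF H] by auto
  have "Z *\<^sub>v v = complex_of_real \<mu> \<cdot>\<^sub>v v"
  proof -
    have "H *\<^sub>v v = Z *\<^sub>v v - complex_of_real \<mu> \<cdot>\<^sub>v v"
      using Z v by (simp add: H_def minus_mult_distrib_mat_vec smult_one_mat_vec)
    show ?thesis
    proof (rule eq_vecI)
      fix i assume "i < dim_vec (complex_of_real \<mu> \<cdot>\<^sub>v v)"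
      then have i: "i < n" using v by simp
      have "(H *\<^sub>v v) $ i = 0" using v(3) i by simp
      with \<open>H *\<^sub>v v = Z *\<^sub>v v - complex_of_real \<mu> \<cdot>\<^sub>v v\<close>
      show "(Z *\<^sub>v v) $ i = (complex_of_real \<mu> \<cdot>\<^sub>v v) $ i" using i Z v by simp
    qed (use Z v in simp)
  qed
  then have "eigenvalue Z (complex_of_real \<mu>)"
    unfolding eigenvalue_def eigenvector_def using v Z by auto
  then show ?thesis using mu_all by blast
qed

lemma smult_mat_vec:
  fixes A :: "complex mat"
  assumes A: "A \<in> carrier_mat n n" and v: "v \<in> carrier_vec n"
  shows "(c \<cdot>\<^sub>m A) *\<^sub>v v = c \<cdot>\<^sub>v (A *\<^sub>v v)"
  by (rule eq_vecI) (use A v in \<open>auto simp: scalar_prod_def sum_distrib_left mult.assoc\<close>)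

lemma rayleigh_lower:
  fixes Z :: "complex mat"
  assumes Z: "Z \<in> carrier_mat n n" and h: "mat_adjoint Z = Z"
    and ev: "\<And>k. eigenvalue Z k \<Longrightarrow> \<exists>x. k = complex_of_real x \<and> b \<le> x"
    and v: "v \<in> carrier_vec n"
  shows "b * nrm v \<le> Re (qform Z v)"
proof (cases "n = 0")
  case True
  then show ?thesis using v Z by (simp add: nrm_def qform_def scalar_prod_def)
next
  case False
  then obtain \<mu> where e: "eigenvalue Z (complex_of_real \<mu>)"
    and m: "\<And>v. v \<in> carrier_vec n \<Longrightarrow> \<mu> * nrm v \<le> Re (qform Z v)"
    using herm_min_eig[OF Z h] by auto
  from ev[OF e] have "b \<le> \<mu>" by auto
  then have "b * nrm v \<le> \<mu> * nrm v" using nrm_nonneg[OF v] by (rule mult_right_mono)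
  also have "\<dots> \<le> Re (qform Z v)" by (rule m[OF v])
  finally show ?thesis .
qed

lemma rayleigh_upper:
  fixes Z :: "complex mat"
  assumes Z: "Z \<in> carrier_mat n n" and h: "mat_adjoint Z = Z"
    and ev: "\<And>k. eigenvalue Z k \<Longrightarrow> \<exists>x. k = complex_of_real x \<and> x \<le> a"
    and v: "v \<in> carrier_vec n"
  shows "Re (qform Z v) \<le> a * nrm v"
proof -
  define W where "W = (-1) \<cdot>\<^sub>m Z"
  have W: "W \<in> carrier_mat n n" using Z by (simp add: W_def)
  have hW: "mat_adjoint W = W"
  proof (rule adj_eqI[OF W])
    fix i j assume i: "i < n" and j: "j < n"
    show "cnj (W $$ (j,i)) = W $$ (i,j)"
      using adj_entry[OF Z h i j] i j Z by (auto simp: W_def)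
  qed
  have Wv: "W *\<^sub>v u = (-1) \<cdot>\<^sub>v (Z *\<^sub>v u)" if "u \<in> carrier_vec n" for u
    unfolding W_def by (rule smult_mat_vec[OF Z that])
  have evW: "\<exists>x. k = complex_of_real x \<and> -a \<le> x" if e: "eigenvalue W k" for k
  proof -
    from e obtain u where u: "u \<in> carrier_vec n" "u \<noteq> 0\<^sub>v n" "W *\<^sub>v u = k \<cdot>\<^sub>v u"
      unfolding eigenvalue_def eigenvector_def using W by auto
    have "Z *\<^sub>v u = (-k) \<cdot>\<^sub>v u"
    proof (rule eq_vecI)
      fix i assume "i < dim_vec ((-k) \<cdot>\<^sub>v u)"
      then have i: "i < n" using u by simp
      have "(W *\<^sub>v u) $ i = (k \<cdot>\<^sub>v u) $ i" using u(3) by simp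
      then show "(Z *\<^sub>v u) $ i = ((-k) \<cdot>\<^sub>v u) $ i" using Wv[OF u(1)] i u Z by (simp add: minus_equation_iff)
    qed (use Z u in simp)
    then have "eigenvalue Z (-k)" unfolding eigenvalue_def eigenvector_def using u Z by auto
    from ev[OF this] obtain x where "-k = complex_of_real x" "x \<le> a" by auto
    then show ?thesis by (intro exI[of _ "-x"]) (auto simp: minus_equation_iff[of k])
  qed
  have "-a * nrm v \<le> Re (qform W v)" by (rule rayleigh_lower[OF W hW evW v])
  moreover have "qform W v = - qform Z v"
    unfolding qform_def Wv[OF v] using v Z by simp
  ultimately show ?thesis by simp
qed

lemma mat_adjoint_mult:
  fixes A B :: "complex mat"
  assumes A: "A \<in> carrier_mat n n" and B: "B \<in> carrier_mat n n"
  shows "mat_adjoint (A * B) = mat_adjoint B * mat_adjoint A"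
proof (rule eq_matI)
  have AB: "A * B \<in> carrier_mat n n" using A B by simp
  fix i j assume "i < dim_row (mat_adjoint B * mat_adjoint A)" "j < dim_col (mat_adjoint B * mat_adjoint A)"
  then have i: "i < n" and j: "j < n" using mat_adjoint_carrier[OF A] mat_adjoint_carrier[OF B] by auto
  have "mat_adjoint (A * B) $$ (i,j) = cnj ((A * B) $$ (j,i))" by (rule mat_adjoint_index[OF AB i j])
  also have "\<dots> = (\<Sum>k<n. cnj (A $$ (j,k)) * cnj (B $$ (k,i)))"
    using A B i j by (simp add: scalar_prod_def lessThan_atLeast0 cnj_sum)
  also have "\<dots> = (mat_adjoint B * mat_adjoint A) $$ (i,j)"
    using A B i j mat_adjoint_carrier[OF A] mat_adjoint_carrier[OF B]
    by (auto simp: scalar_prod_def lessThan_atLeast0 mat_adjoint_index intro!: sum.cong)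
  finally show "mat_adjoint (A * B) $$ (i,j) = (mat_adjoint B * mat_adjoint A) $$ (i,j)" .
qed (use A B mat_adjoint_carrier[OF A] mat_adjoint_carrier[OF B] mat_adjoint_carrier[OF mult_carrier_mat[OF A B]] in auto)

lemma cinner_swap:
  fixes u v :: "complex vec"
  assumes u: "u \<in> carrier_vec n" and v: "v \<in> carrier_vec n"
  shows "conjugate u \<bullet> v = cnj (conjugate v \<bullet> u)"
  using u v by (auto simp: scalar_prod_def cnj_sum mult.commute)

lemma ident: fixes a b P S c \<alpha> \<beta> :: real
  shows "a*((a-b)^2*P + 2*(a-b)*(a+b)*c + (a+b)^2*S - b*((a-b)^2*\<alpha>+(a+b)^2*\<beta>)) + b*(a*((a-b)^2*\<alpha> + (-(a+b))^2*\<beta>) - ((a-b)^2*P + 2*(a-b)*(-(a+b))*c + (-(a+b))^2*S)) = (a-b)*((a+b)^2*(P+2*c+S) - 4*a*b*P)"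
  by (simp add: power2_eq_square algebra_simps)

theorem corollary1p6:
  fixes Z E :: "complex mat" and n :: nat and a b :: real
  assumes "Z \<in> carrier_mat n n" and "E \<in> carrier_mat n n"
    and "positive_definite Z"
    and "eigenvalue Z (complex_of_real a)"
    and "eigenvalue Z (complex_of_real b)"
    and "\<forall>k. eigenvalue Z k \<longrightarrow> (\<exists>x. k = complex_of_real x \<and> b \<le> x \<and> x \<le> a)"
    and "mat_adjoint E = E" and "E * E = E"
  shows "loewner_le (E * Z * E) (complex_of_real ((a + b)^2 / (4 * a * b)) \<cdot>\<^sub>m Z)"
proof -
  note Z = assms(1) and E = assms(2) and pd = assms(3) and eva = assms(4) and evb = assms(5)
    and evall = assms(6) and hE = assms(7) and EE = assms(8)
  have hZ: "mat_adjoint Z = Z" using pd by (simp add: positive_definite_def hermitian_mat_def)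
  have pdZ: "\<And>v. v \<in> carrier_vec n \<Longrightarrow> v \<noteq> 0\<^sub>v n \<Longrightarrow> 0 < Re (qform Z v)"
    using pd Z by (auto simp: positive_definite_def)
  have lowZ: "b * nrm v \<le> Re (qform Z v)" if "v \<in> carrier_vec n" for v
    by (rule rayleigh_lower[OF Z hZ _ that]) (use evall in blast)
  have upZ: "Re (qform Z v) \<le> a * nrm v" if "v \<in> carrier_vec n" for v
    by (rule rayleigh_upper[OF Z hZ _ that]) (use evall in blast)
  have b0: "0 < b"
  proof -
    from evb obtain v where v: "v \<in> carrier_vec n" "v \<noteq> 0\<^sub>v n" "Z *\<^sub>v v = complex_of_real b \<cdot>\<^sub>v v"
      unfolding eigenvalue_def eigenvector_def using Z by auto
    have "qform Z v = complex_of_real b * complex_of_real (nrm v)"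
      unfolding qform_def v(3) using v(1) cinner_self[OF v(1)] by simp
    then have "0 < b * nrm v" using pdZ[OF v(1,2)] by simp
    then show ?thesis using nrm_nonneg[OF v(1)] by (simp add: zero_less_mult_iff)
  qed
  have ba: "b \<le> a" using evall eva by force
  have a0: "0 < a" using b0 ba by simp
  define \<kappa> where "\<kappa> = (a + b)^2 / (4 * a * b)"
  define M where "M = E * Z * E"
  define R where "R = complex_of_real \<kappa> \<cdot>\<^sub>m Z"
  have M: "M \<in> carrier_mat n n" using E Z by (simp add: M_def)
  have R: "R \<in> carrier_mat n n" using Z by (simp add: R_def)
  have hM: "mat_adjoint M = M"
  proof -
    have "mat_adjoint M = mat_adjoint E * mat_adjoint (E * Z)"
      unfolding M_def by (rule mat_adjoint_mult) (use E Z in auto)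
    also have "\<dots> = E * (Z * E)" using mat_adjoint_mult[OF E Z] hE hZ by simp
    finally show ?thesis unfolding M_def using E Z by (simp add: assoc_mult_mat[of _ n n _ n _ n])
  qed
  have hR: "mat_adjoint R = R"
  proof (rule adj_eqI[OF R])
    fix i j assume i: "i < n" and j: "j < n"
    show "cnj (R $$ (j,i)) = R $$ (i,j)"
      using adj_entry[OF Z hZ i j] i j Z by (auto simp: R_def)
  qed
  have hD: "mat_adjoint (R - M) = R - M"
  proof (rule adj_eqI)
    show "R - M \<in> carrier_mat n n" by (rule minus_carrier_mat[OF M])
    fix i j assume i: "i < n" and j: "j < n"
    show "cnj ((R - M) $$ (j,i)) = (R - M) $$ (i,j)"
      using adj_entry[OF R hR i j] adj_entry[OF M hM i j] i j R M by auto
  qed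
  have key: "0 \<le> Re (qform (R - M) x)" if x: "x \<in> carrier_vec n" for x
  proof -
    define w where "w = E *\<^sub>v x"
    define r where "r = x - w"
    have w: "w \<in> carrier_vec n" using E x by (simp add: w_def)
    have r: "r \<in> carrier_vec n" using w x by (simp add: r_def)
    have xwr: "x = w + r" using w x by (auto simp: r_def)
    have Mx: "qform M x = qform Z w"
    proof -
      have c1: "E * Z * E *\<^sub>v x = (E * Z) *\<^sub>v (E *\<^sub>v x)"
        by (rule assoc_mult_mat_vec) (use E Z x in auto)
      have c2: "(E * Z) *\<^sub>v (E *\<^sub>v x) = E *\<^sub>v (Z *\<^sub>v (E *\<^sub>v x))"
        by (rule assoc_mult_mat_vec) (use E Z x in auto)
      have "M *\<^sub>v x = E *\<^sub>v (Z *\<^sub>v w)" unfolding M_def w_def c1 c2 ..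
      then have "qform M x = conjugate x \<bullet> (E *\<^sub>v (Z *\<^sub>v w))" by (simp add: qform_def)
      also have "\<dots> = conjugate (E *\<^sub>v x) \<bullet> (Z *\<^sub>v w)"
        using adj_inner[OF E x, of "Z *\<^sub>v w"] hE Z w by simp
      finally show ?thesis by (simp add: qform_def w_def)
    qed
    have Rx: "qform R x = complex_of_real \<kappa> * qform Z x"
      unfolding qform_def R_def smult_mat_vec[OF Z x] using x Z by simp
    have Dx: "qform (R - M) x = qform R x - qform M x"
      unfolding qform_def using R M x by (simp add: minus_mult_distrib_mat_vec scalar_prod_minus_distrib[of _ n])
    have orth: "conjugate w \<bullet> r = 0"
    proof -
      have "conjugate w \<bullet> x = conjugate x \<bullet> (E *\<^sub>v x)"
        using adj_inner[OF E x x] hE by (simp add: w_def)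
      moreover have "conjugate w \<bullet> w = conjugate x \<bullet> (E *\<^sub>v x)"
      proof -
        have "conjugate x \<bullet> (E *\<^sub>v w) = conjugate w \<bullet> w"
          using adj_inner[OF E x w] hE by (simp add: w_def)
        moreover have "E *\<^sub>v w = E *\<^sub>v x" using E x EE by (simp add: w_def assoc_mult_mat_vec[symmetric, of E n n E n x])
        ultimately show ?thesis by simp
      qed
      ultimately show ?thesis using w x by (simp add: r_def scalar_prod_minus_distrib[of _ n])
    qed
    have orth2: "conjugate r \<bullet> w = 0" using cinner_swap[OF r w] orth by simp
    define P where "P = Re (qform Z w)"
    define S where "S = Re (qform Z r)"
    define C where "C = conjugate w \<bullet> (Z *\<^sub>v r)"
    define \<alpha> where "\<alpha> = nrm w"
    define \<beta> where "\<beta> = nrm r"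
    have CC: "conjugate r \<bullet> (Z *\<^sub>v w) = cnj C" unfolding C_def by (rule herm_inner[OF Z hZ r w])
    have Qst: "Re (qform Z (complex_of_real s \<cdot>\<^sub>v w + complex_of_real t \<cdot>\<^sub>v r)) = s^2 * P + 2 * s * t * Re C + t^2 * S" for s t
      unfolding qform_expand[OF Z w r] CC C_def[symmetric] by (simp add: P_def S_def power2_eq_square)
    have Nst: "nrm (complex_of_real s \<cdot>\<^sub>v w + complex_of_real t \<cdot>\<^sub>v r) = s^2 * \<alpha> + t^2 * \<beta>" for s t
    proof -
      have I: "1\<^sub>m n \<in> carrier_mat n n" by simp
      have "nrm (complex_of_real s \<cdot>\<^sub>v w + complex_of_real t \<cdot>\<^sub>v r) = Re (qform (1\<^sub>m n) (complex_of_real s \<cdot>\<^sub>v w + complex_of_real t \<cdot>\<^sub>v r))"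
        by (rule nrm_qform) (use w r in simp)
      also have "\<dots> = s^2 * \<alpha> + t^2 * \<beta>"
        unfolding qform_expand[OF I w r] using w r orth orth2
        by (simp add: \<alpha>_def \<beta>_def nrm_qform[symmetric] power2_eq_square)
      finally show ?thesis .
    qed
    have low: "b * (s^2 * \<alpha> + t^2 * \<beta>) \<le> s^2 * P + 2 * s * t * Re C + t^2 * S" for s t
      using lowZ[of "complex_of_real s \<cdot>\<^sub>v w + complex_of_real t \<cdot>\<^sub>v r"] w r Qst Nst by simp
    have up: "s^2 * P + 2 * s * t * Re C + t^2 * S \<le> a * (s^2 * \<alpha> + t^2 * \<beta>)" for s t
      using upZ[of "complex_of_real s \<cdot>\<^sub>v w + complex_of_real t \<cdot>\<^sub>v r"] w r Qst Nst by simp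
    have Qx: "Re (qform Z x) = P + 2 * Re C + S"
      using Qst[of 1 1] w r by (simp add: xwr)
    have T: "0 \<le> (a + b)^2 * (P + 2 * Re C + S) - 4 * a * b * P"
    proof (cases "a = b")
      case True
      have "b * (1 * \<alpha> + 1 * \<beta>) \<le> P + 2 * Re C + S" using low[of 1 1] by simp
      moreover have "P \<le> a * \<alpha>" using up[of 1 0] by simp
      moreover have "0 \<le> \<beta>" using nrm_nonneg[OF r] by (simp add: \<beta>_def)
      ultimately have h0: "0 \<le> S + 2 * Re C" using True mult_nonneg_nonneg[OF less_imp_le[OF b0], of \<beta>]
        by (simp add: algebra_simps)
      have "0 \<le> 4 * b^2 * (S + 2 * Re C)" using h0 by simp
      also have "4 * b^2 * (S + 2 * Re C) = (a + b)^2 * (P + 2 * Re C + S) - 4 * a * b * P"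
        using True by (simp add: power2_eq_square algebra_simps)
      finally show ?thesis .
    next
      case False
      then have ab: "0 < a - b" using ba by simp
      have l1: "b * ((a-b)^2 * \<alpha> + (a+b)^2 * \<beta>) \<le> (a-b)^2 * P + 2 * (a-b) * (a+b) * Re C + (a+b)^2 * S"
        using low[of "a-b" "a+b"] by simp
      have u2: "(a-b)^2 * P + 2 * (a-b) * (-(a+b)) * Re C + (-(a+b))^2 * S \<le> a * ((a-b)^2 * \<alpha> + (-(a+b))^2 * \<beta>)"
        using up[of "a-b" "-(a+b)"] by simp
      have "0 \<le> a * ((a-b)^2 * P + 2 * (a-b) * (a+b) * Re C + (a+b)^2 * S - b * ((a-b)^2 * \<alpha> + (a+b)^2 * \<beta>))
              + b * (a * ((a-b)^2 * \<alpha> + (-(a+b))^2 * \<beta>) - ((a-b)^2 * P + 2 * (a-b) * (-(a+b)) * Re C + (-(a+b))^2 * S))"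
        using l1 u2 a0 b0 by (intro add_nonneg_nonneg mult_nonneg_nonneg) auto
      also have "\<dots> = (a - b) * ((a + b)^2 * (P + 2 * Re C + S) - 4 * a * b * P)"
        by (rule ident)
      finally show ?thesis using ab by (simp add: zero_le_mult_iff)
    qed
    have "Re (qform (R - M) x) = \<kappa> * Re (qform Z x) - P"
      using Dx Rx Mx by (simp add: P_def)
    also have "\<dots> = ((a + b)^2 * (P + 2 * Re C + S) - 4 * a * b * P) / (4 * a * b)"
      using a0 b0 unfolding Qx \<kappa>_def by (simp add: field_simps)
    finally show ?thesis using T a0 b0 by simp
  qed
  show ?thesis
    unfolding loewner_le_def positive_semidefinite_def hermitian_mat_def
    using M R hM hR hD key minus_carrier_mat[OF M, of R]
    by (simp add: M_def[symmetric] R_def[symmetric] \<kappa>_def[symmetric])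
qed

end
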